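(* Let $\mathbf p$ be a probability vector in $\mathbb R^k$ with all $p_j>0$, let $p_{\max}=\max_jp_j$, and define $$\alpha_{\min}(\mathbf p)=1-\frac{p_{\max}^{-1/3}}{\sum_{j=1}^kp_j^{2/3}}.$$ Then for every $\alpha\in[\alpha_{\min}(\mathbf p),1]$, $v^*_\alpha(\mathbf p)=\|\mathbf p\|_{2/3}=\big(\sum_jp_j^{2/3}\big)^{3/2}$. Consequently, for every such $\alpha$, the simple regret bound of Algorithm 1, namely $O\big(\sqrt{n/T}\,v^*_\alpha(\mathbf p)\big)$, equals $O\big(\sqrt{n/T}\,\|\mathbf p\|_{2/3}\big)$, the optimal rate of fully active policies, which is also the optimal rate over all policies.
   Context: $v^*_\alpha(\mathbf p)$ denotes the minimum value of $\sum_jp_j/\sqrt{q_j}$ over $\mathbf q\in\mathbb R^k$ with $q_j>0$, $\sum_jq_j=1$, subject to $q_j\ge(1-\alpha)p_j$ for all $j$. Setting: bandit with subpopulations with $n$ treatments, $k$ subpopulations, rewards in $[0,1]$, subpopulation distribution $\mathbf p$ known to the agent; a round is passive if $C_t\sim\mathbf p$ is revealed and active if the agent chooses $C_t$; worst-case simple regret $\sup_{\boldsymbol\nu}\sum_jp_j\mathbb E[\max_i\mu_{i,j}-\mu_{\hat a_j,j}]$ over $T$ rounds. Algorithm 1 (budget $\alpha$, using an anytime minimax-optimal simple-regret bandit subroutine $\mathrm{Alg}_{SR}$ per subpopulation): sample $C_t\sim\mathbf p$ for the first $\lfloor(1-\alpha)T\rfloor$ rounds; then with $c^*$ the unique solution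 of $\sum_j\max((1-\alpha)p_j,cp_j^{2/3})=1$, $q^*_j=\max((1-\alpha)p_j,c^*p_j^{2/3})$, $r_j=(q^*_j-(1-\alpha)p_j)/\alpha$, sample $C_t\sim\mathbf r$ in the remaining rounds; treatments and final recommendations come from the subroutine copy for $C_t$. Its worst-case simple regret is $O(\sqrt{n/T}\,v^*_\alpha(\mathbf p))$ for large $T$. Fully active policies may choose $C_t$ every round; $O$ hides universal constants. *)

theory Defs
  imports Complex_Main
begin

definition feasible_alloc :: "real \<Rightarrow> ('k::finite \<Rightarrow> real) \<Rightarrow> ('k \<Rightarrow> real) \<Rightarrow> bool" where
  "feasible_alloc \<alpha> p q \<longleftrightarrow>
     (\<forall>j. q j > 0) \<and> (\<Sum>j\<in>UNIV. q j) = 1 \<and> (\<forall>j. q j \<ge> (1 - \<alpha>) * p j)"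

definition v_star :: "real \<Rightarrow> ('k::finite \<Rightarrow> real) \<Rightarrow> real" where
  "v_star \<alpha> p = Inf ((\<lambda>q. \<Sum>j\<in>UNIV. p j / sqrt (q j)) ` {q. feasible_alloc \<alpha> p q})"

definition alpha_min :: "('k::finite \<Rightarrow> real) \<Rightarrow> real" where
  "alpha_min p = 1 - (Max (range p)) powr (-1/3) / (\<Sum>j\<in>UNIV. p j powr (2/3))"

end

theory Submission
  imports Defs
begin

lemma key_ineq:
  fixes r s c :: real
  assumes "r > 0" "s > 0" "c > 0"
  shows "r^3 / s \<ge> (3 * r^2 * c - s^2 * c^3) / 2"
proof -
  define u where "u = c * s"
  have u: "u > 0" using assms by (simp add: u_def)
  have "0 \<le> (r - u)^2 * (2*r + u)" using assms u by simp
  hence "3 * r^2 * u - u^3 \<le> 2 * r^3" by (simp add: algebra_simps power2_eq_square power3_eq_cube)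
  hence "(3 * r^2 * c - s^2 * c^3) * s \<le> 2 * r^3"
    by (simp add: u_def algebra_simps power2_eq_square power3_eq_cube)
  thus ?thesis using assms by (simp add: field_simps)
qed

theorem lemma6:
  fixes p :: "'k::finite \<Rightarrow> real" and \<alpha> :: real
  assumes "\<forall>j. p j > 0"
    and "(\<Sum>j\<in>UNIV. p j) = 1"
    and "alpha_min p \<le> \<alpha>" and "\<alpha> \<le> 1"
  shows "v_star \<alpha> p = (\<Sum>j\<in>UNIV. p j powr (2/3)) powr (3/2)"
proof -
  define S where "S = (\<Sum>j\<in>UNIV. p j powr (2/3))"
  define c where "c = sqrt S"
  define r where "r j = p j powr (1/3)" for j
  have pp: "p j > 0" for j using assms(1) by auto
  have rp: "r j > 0" for j using pp[of j] by (simp add: r_def)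
  have r2: "r j ^ 2 = p j powr (2/3)" for j
  proof -
    have "r j ^ 2 = r j powr (real 2)" using rp[of j] by (simp add: powr_realpow)
    also have "\<dots> = p j powr (2/3)" by (simp add: r_def powr_powr)
    finally show ?thesis .
  qed
  have r3: "r j ^ 3 = p j" for j
  proof -
    have "r j ^ 3 = r j powr (real 3)" using rp[of j] by (simp add: powr_realpow)
    also have "\<dots> = p j" using pp[of j] by (simp add: r_def powr_powr)
    finally show ?thesis .
  qed
  have Spos: "S > 0" unfolding S_def by (intro sum_pos) (use pp in \<open>auto simp: less_imp_neq[symmetric]\<close>)
  have cpos: "c > 0" using Spos by (simp add: c_def)
  have c2: "c^2 = S" using Spos by (simp add: c_def)
  have c3: "S powr (3/2) = c^3"
  proof -
    have "c^3 = (S powr (1/2)) ^ 3" using Spos by (simp add: c_def sqrt_def root_powr_inverse)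
    also have "\<dots> = S powr (3/2)" using Spos by (simp flip: powr_realpow add: powr_powr)
    finally show ?thesis by simp
  qed
  define F where "F q = (\<Sum>j\<in>UNIV. p j / sqrt (q j))" for q :: "'k \<Rightarrow> real"
  define qs where "qs j = r j ^ 2 / S" for j
  have qs_pos: "qs j > 0" for j using rp[of j] Spos by (simp add: qs_def)
  have qs_sum: "(\<Sum>j\<in>UNIV. qs j) = 1"
    using Spos by (simp add: qs_def r2 S_def flip: sum_divide_distrib)
  have sq: "sqrt (qs j) = r j / c" for j
    using rp[of j] cpos c2 by (simp add: qs_def real_sqrt_divide c_def)
  have Fqs: "F qs = c^3"
  proof -
    have "F qs = (\<Sum>j\<in>UNIV. r j ^ 2 * c)"
      unfolding F_def sq
      by (rule sum.cong) (use rp cpos in \<open>auto simp: r3[symmetric] power2_eq_square power3_eq_cube field_simps\<close>)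
    also have "\<dots> = S * c" by (simp add: r2 S_def sum_distrib_right)
    finally show ?thesis using c2 by (simp add: power2_eq_square power3_eq_cube)
  qed
  have feas: "feasible_alloc \<alpha> p qs"
    unfolding feasible_alloc_def
  proof (intro conjI allI qs_pos qs_sum)
    fix j
    show "(1 - \<alpha>) * p j \<le> qs j"
    proof (cases "1 - \<alpha> \<le> 0")
      case True
      then show ?thesis using pp[of j] qs_pos[of j] by (meson less_eq_real_def mult_nonpos_nonneg order_trans)
    next
      case False
      define M where "M = Max (range p)"
      have pM: "p j \<le> M" unfolding M_def by simp
      have "1 - \<alpha> \<le> M powr (-1/3) / S" using assms(3) by (simp add: alpha_min_def M_def S_def)
      also have "\<dots> \<le> p j powr (-1/3) / S"
        using pM pp[of j] Spos by (intro divide_right_mono powr_mono2') auto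
      finally have h: "(1 - \<alpha>) * p j \<le> p j powr (-1/3) / S * p j"
        using pp[of j] by (intro mult_right_mono) auto
      have "p j powr (-1/3) * p j = p j powr (2/3)"
      proof -
        have "p j powr (-1/3) * p j = p j powr (-1/3) * p j powr 1" using pp[of j] by simp
        also have "\<dots> = p j powr (-1/3 + 1)" by (simp only: powr_add[symmetric])
        finally show ?thesis by simp
      qed
      then show ?thesis using h by (simp add: qs_def r2)
    qed
  qed
  have lower: "c^3 \<le> F q" if "feasible_alloc \<alpha> p q" for q
  proof -
    have qp: "q j > 0" and qsum: "(\<Sum>j\<in>UNIV. q j) = 1" for j
      using that by (auto simp: feasible_alloc_def)
    have "(\<Sum>j\<in>UNIV. (3 * r j ^ 2 * c - sqrt (q j) ^ 2 * c^3) / 2) \<le> F q"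
      unfolding F_def
      by (rule sum_mono) (use key_ineq[OF rp _ cpos] qp in \<open>auto simp: r3\<close>)
    moreover have "(\<Sum>j\<in>UNIV. (3 * r j ^ 2 * c - sqrt (q j) ^ 2 * c^3) / 2) = c^3"
    proof -
      have "(\<Sum>j\<in>UNIV. (3 * r j ^ 2 * c - sqrt (q j) ^ 2 * c^3) / 2)
          = (3 * c * (\<Sum>j\<in>UNIV. r j ^ 2) - c^3 * (\<Sum>j\<in>UNIV. q j)) / 2"
      proof -
        have "(\<Sum>j\<in>UNIV. (3 * r j ^ 2 * c - sqrt (q j) ^ 2 * c^3) / 2)
           = (\<Sum>j\<in>UNIV. ((3 * c) * r j ^ 2 - c^3 * q j) / 2)"
          by (rule sum.cong) (use qp in \<open>auto simp: less_imp_le\<close>)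
        also have "\<dots> = ((\<Sum>j\<in>UNIV. (3 * c) * r j ^ 2) - (\<Sum>j\<in>UNIV. c^3 * q j)) / 2"
          by (simp only: sum_divide_distrib[symmetric] sum_subtractf)
        also have "\<dots> = (3 * c * (\<Sum>j\<in>UNIV. r j ^ 2) - c^3 * (\<Sum>j\<in>UNIV. q j)) / 2"
          by (simp only: sum_distrib_left)
        finally show ?thesis .
      qed
      also have "\<dots> = c^3"
      proof -
        have "(\<Sum>j\<in>UNIV. r j ^ 2) = S" by (simp only: r2 S_def)
        then show ?thesis using qsum c2 by (simp add: power2_eq_square power3_eq_cube)
      qed
      finally show ?thesis .
    qed
    ultimately show ?thesis by simp
  qed
  have "v_star \<alpha> p = c^3"
    unfolding v_star_def F_def[symmetric]
    by (rule cInf_eq_minimum) (use feas Fqs lower in \<open>auto intro!: image_eqI[where x=qs]\<close>)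
  thus ?thesis using c3 by (simp add: S_def)
qed

end
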